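(* Let $J$ be a real symmetric $n\times n$ matrix with pairwise distinct eigenvalues, and consider the Euler–Arnold equations $$\dot M = [M,\Omega],\qquad M = \Omega J + J\Omega,$$ where $M\in\mathfrak{so}(n)$ and $\Omega\in\mathfrak{so}(n)$ is the unique skew-symmetric matrix with $\Omega J + J\Omega = M$. Then $M$ is an equilibrium point of this system if and only if there exists an orthonormal basis of $\mathbb{R}^n$ in which $J$ is diagonal and $\Omega$ is block-diagonal of the form $$\Omega = \operatorname{diag}\bigl(\omega_1 A_1,\ \dots,\ \omega_k A_k,\ 0,\ \dots,\ 0\bigr),$$ where, for each $i=1,\dots,k$, $A_i\in \mathfrak{so}(2m_i)\cap \mathrm{SO}(2m_i)$ for some integer $m_i>0$, and $\omega_1,\dots,\omega_k$ are pairwise distinct positive real numbers. Moreover, this form of $\Omega$ is unique up to a permutation of the blocks.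
   Context: $\mathfrak{so}(m)$ denotes the space of real skew-symmetric $m\times m$ matrices and $\mathrm{SO}(m)$ the group of real orthogonal $m\times m$ matrices of determinant $1$; $[X,Y]=XY-YX$. The linear map $\Omega\mapsto \Omega J + J\Omega$ is invertible on $\mathfrak{so}(n)$, so $\Omega$ is determined by $M$. An equilibrium point means a point $M$ with $[M,\Omega]=0$. In the block form, the trailing zero entries form a zero block (possibly empty), and $k\ge 0$. *)

theory Defs
  imports "Jordan_Normal_Form.Char_Poly"
begin

definition skew_mat :: "nat \<Rightarrow> real mat \<Rightarrow> bool" where
  "skew_mat n A \<longleftrightarrow> A \<in> carrier_mat n n \<and> transpose_mat A = - A"

definition symmetric_mat :: "nat \<Rightarrow> real mat \<Rightarrow> bool" where
  "symmetric_mat n A \<longleftrightarrow> A \<in> carrier_mat n n \<and> transpose_mat A = A"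

definition orth_mat :: "nat \<Rightarrow> real mat \<Rightarrow> bool" where
  "orth_mat n Q \<longleftrightarrow> Q \<in> carrier_mat n n \<and> transpose_mat Q * Q = 1\<^sub>m n"

definition so_SO_block :: "real mat \<Rightarrow> bool" where
  "so_SO_block A \<longleftrightarrow> (\<exists>m>0. skew_mat (2*m) A \<and> orth_mat (2*m) A \<and> det A = 1)"

text \<open>Block form: Q is an orthogonal matrix (an orthonormal basis, given by its columns)
  in which J is diagonal and Omega equals diag(w_1 A_1, ..., w_k A_k, 0, ..., 0),
  where bs = [(w_1, A_1), ..., (w_k, A_k)] and the trailing zero block has size
  n - sum of the block sizes (possibly 0).\<close>
definition block_form :: "nat \<Rightarrow> real mat \<Rightarrow> real mat \<Rightarrow> real mat \<Rightarrow> (real \<times> real mat) list \<Rightarrow> bool" where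
  "block_form n J \<Omega> Q bs \<longleftrightarrow>
     orth_mat n Q \<and>
     diagonal_mat (transpose_mat Q * J * Q) \<and>
     (\<forall>(w, A) \<in> set bs. w > 0 \<and> so_SO_block A) \<and>
     distinct (map fst bs) \<and>
     sum_list (map (\<lambda>(w, A). dim_row A) bs) \<le> n \<and>
     transpose_mat Q * \<Omega> * Q =
       diag_block_mat (map (\<lambda>(w, A). w \<cdot>\<^sub>m A) bs @
         [0\<^sub>m (n - sum_list (map (\<lambda>(w, A). dim_row A) bs))
              (n - sum_list (map (\<lambda>(w, A). dim_row A) bs))])"

end

theory Submission
  imports Defs
begin

lemma mult_entry:
  assumes "A \<in> carrier_mat n k" "B \<in> carrier_mat k m" "i < n" "j < m"
  shows "(A * B) $$ (i, j) = (\<Sum>l\<in>{0..<k}. A $$ (i, l) * B $$ (l, j))"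
  using assms by (auto simp: scalar_prod_def intro!: sum.cong)

lemma diag_mult_left:
  fixes D X :: "real mat"
  assumes "diagonal_mat D" "D \<in> carrier_mat n n" "X \<in> carrier_mat n m" "i < n" "j < m"
  shows "(D * X) $$ (i, j) = D $$ (i, i) * X $$ (i, j)"
proof -
  have "(D * X) $$ (i, j) = (\<Sum>l\<in>{0..<n}. D $$ (i, l) * X $$ (l, j))"
    using mult_entry assms by blast
  also have "\<dots> = (\<Sum>l\<in>{0..<n}. if l = i then D $$ (i, i) * X $$ (i, j) else 0)"
    using assms by (intro sum.cong) (auto simp: diagonal_mat_def)
  also have "\<dots> = D $$ (i, i) * X $$ (i, j)" using assms by simp
  finally show ?thesis .
qed

lemma diag_mult_right:
  fixes D X :: "real mat"
  assumes "diagonal_mat D" "D \<in> carrier_mat m m" "X \<in> carrier_mat n m" "i < n" "j < m"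
  shows "(X * D) $$ (i, j) = X $$ (i, j) * D $$ (j, j)"
proof -
  have "(X * D) $$ (i, j) = (\<Sum>l\<in>{0..<m}. X $$ (i, l) * D $$ (l, j))"
    using mult_entry assms by blast
  also have "\<dots> = (\<Sum>l\<in>{0..<m}. if l = j then X $$ (i, j) * D $$ (j, j) else 0)"
    using assms by (intro sum.cong) (auto simp: diagonal_mat_def)
  also have "\<dots> = X $$ (i, j) * D $$ (j, j)" using assms by simp
  finally show ?thesis .
qed

lemma diag_comm:
  fixes D S :: "real mat"
  assumes "diagonal_mat D" "diagonal_mat S" "D \<in> carrier_mat n n" "S \<in> carrier_mat n n"
  shows "D * S = S * D"
proof (rule eq_matI)
  fix i j assume "i < dim_row (S * D)" "j < dim_col (S * D)"
  hence ij: "i < n" "j < n" using assms by auto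
  show "(D * S) $$ (i, j) = (S * D) $$ (i, j)"
    using diag_mult_left[OF assms(1,3,4) ij] diag_mult_right[OF assms(1,3,4) ij] assms ij
    by (cases "i = j") (auto simp: diagonal_mat_def)
qed (use assms in auto)

lemma skew_entry:
  fixes X :: "real mat"
  assumes "X \<in> carrier_mat N N" "transpose_mat X = - X" "i < N" "j < N"
  shows "X $$ (j, i) = - X $$ (i, j)"
proof -
  have 1: "transpose_mat X $$ (i, j) = X $$ (j, i)" using assms(1,3,4) by simp
  have 2: "(- X) $$ (i, j) = - X $$ (i, j)" using assms(1,3,4) by simp
  from assms(2) 1 2 show ?thesis by metis
qed

lemma skew_sq_diag:
  fixes X :: "real mat"
  assumes "X \<in> carrier_mat N N" "transpose_mat X = - X" "i < N"
  shows "(X * X) $$ (i, i) = - (\<Sum>l\<in>{0..<N}. (X $$ (i, l))\<^sup>2)"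
proof -
  have "(X * X) $$ (i, i) = (\<Sum>l\<in>{0..<N}. X $$ (i, l) * X $$ (l, i))"
    using mult_entry assms by blast
  also have "\<dots> = (\<Sum>l\<in>{0..<N}. - (X $$ (i, l))\<^sup>2)"
  proof (rule sum.cong)
    fix l assume "l \<in> {0..<N}"
    hence "X $$ (l, i) = - X $$ (i, l)" using skew_entry[OF assms(1,2) assms(3)] by simp
    thus "X $$ (i, l) * X $$ (l, i) = - (X $$ (i, l))\<^sup>2" by (simp add: power2_eq_square)
  qed simp
  finally show ?thesis by (simp add: sum_negf)
qed

lemma self_prod_pos:
  fixes v :: "real vec"
  assumes "v \<in> carrier_vec n" "v \<noteq> 0\<^sub>v n"
  shows "v \<bullet> v > 0"
proof -
  have "\<exists>i<n. v $ i \<noteq> 0"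
  proof (rule ccontr)
    assume "\<not> ?thesis"
    hence "v = 0\<^sub>v n" using assms(1) by (intro eq_vecI) auto
    thus False using assms(2) by simp
  qed
  then obtain i where i: "i < n" "v $ i \<noteq> 0" by blast
  have "v \<bullet> v = (\<Sum>l\<in>{0..<n}. v $ l * v $ l)" using assms by (simp add: scalar_prod_def)
  also have "\<dots> > 0"
    by (rule sum_pos2[of _ i]) (use i in \<open>auto simp: zero_less_mult_iff linorder_neq_iff\<close>)
  finally show ?thesis .
qed

lemma no_real_eig:
  fixes A :: "real mat"
  assumes A: "A \<in> carrier_mat s s" and sq: "A * A = - (1\<^sub>m s)"
  shows "\<not> eigenvalue A t"
proof
  assume "eigenvalue A t"
  then obtain v where v: "v \<in> carrier_vec s" "v \<noteq> 0\<^sub>v s" "A *\<^sub>v v = t \<cdot>\<^sub>v v"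
    using A unfolding eigenvalue_def eigenvector_def by auto
  have "(A * A) *\<^sub>v v = A *\<^sub>v (A *\<^sub>v v)" using A v by simp
  also have "\<dots> = t \<cdot>\<^sub>v (A *\<^sub>v v)" using v A by (simp add: mult_mat_vec)
  also have "\<dots> = (t * t) \<cdot>\<^sub>v v" using v by (auto simp: smult_smult_assoc)
  finally have 1: "(A * A) *\<^sub>v v = (t * t) \<cdot>\<^sub>v v" .
  have 2: "(A * A) *\<^sub>v v = - v" using sq v by auto
  have "v = 0\<^sub>v s"
  proof (rule eq_vecI)
    fix i assume "i < dim_vec (0\<^sub>v s)"
    hence i: "i < s" by simp
    have "((A * A) *\<^sub>v v) $ i = (t * t) * v $ i" using 1 i v by (metis carrier_vecD index_smult_vec(1))
    moreover have "((A * A) *\<^sub>v v) $ i = - v $ i" using 2 i v by simp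
    ultimately have "(t * t + 1) * v $ i = 0" by (simp add: algebra_simps)
    moreover have "t * t + 1 \<noteq> 0" using zero_le_square[of t] by linarith
    ultimately show "v $ i = 0\<^sub>v s $ i" using i by simp
  qed (use v in auto)
  thus False using v by simp
qed

lemma skew_orth_det:
  fixes A :: "real mat"
  assumes A: "A \<in> carrier_mat s s" and s: "s > 0" and skew: "transpose_mat A = - A"
    and sq: "A * A = - (1\<^sub>m s)"
  shows "\<exists>m>0. s = 2 * m \<and> det A = 1"
proof -
  have m1: "- (1\<^sub>m s) = (-1) \<cdot>\<^sub>m (1\<^sub>m s :: real mat)" by (rule eq_matI) auto
  have mA: "- A = (-1) \<cdot>\<^sub>m A" by (rule eq_matI) auto
  have dd: "det A * det A = (-1) ^ s"
  proof -
    have "det (A * A) = det A * det A" by (rule det_mult[OF A A])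
    moreover have "det (A * A) = (-1) ^ s" unfolding sq m1 by simp
    ultimately show ?thesis by simp
  qed
  have dt: "det A = (-1) ^ s * det A"
  proof -
    have "det A = det (transpose_mat A)" using det_transpose[OF A] by simp
    also have "\<dots> = det ((-1) \<cdot>\<^sub>m A)" unfolding skew mA ..
    also have "\<dots> = (-1) ^ s * det A" using A by simp
    finally show ?thesis .
  qed
  have ev: "even s"
  proof (rule ccontr)
    assume "odd s"
    hence "det A = 0" using dt by simp
    thus False using dd \<open>odd s\<close> by simp
  qed
  then obtain m where sm: "s = 2 * m" by blast
  hence m: "m > 0" using s by simp
  have d1: "det A * det A = 1" using dd ev by simp
  have pos: "det A > 0"
  proof (rule ccontr)
    assume "\<not> det A > 0"
    moreover have "det A \<noteq> 0" using d1 by auto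
    ultimately have neg: "det A < 0" by simp
    let ?p = "char_poly A"
    have lc: "lead_coeff ?p = 1" using degree_monic_char_poly[OF A] by simp
    obtain N where N: "\<forall>x\<ge>N. poly ?p x \<ge> lead_coeff ?p"
      using poly_pinfty_gt_lc[of ?p] lc by auto
    define b where "b = max N 1"
    have "b \<ge> N" unfolding b_def by simp
    hence "poly ?p b \<ge> lead_coeff ?p" using N by blast
    hence pb: "poly ?p b > 0" using lc by simp
    have "poly ?p 0 = det (- (char_matrix A 0))" by (rule char_poly_matrix[OF A])
    also have "char_matrix A 0 = A" unfolding char_matrix_def using A by (intro eq_matI) auto
    also have "det (- A) = det A" unfolding mA using A ev by simp
    finally have p0: "poly ?p 0 < 0" using neg by simp
    have b0: "0 < b" unfolding b_def by simp
    obtain x where "0 < x" "x < b" "poly ?p x = 0"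
      using poly_IVT_pos[OF b0 p0 pb] by auto
    hence "eigenvalue A x" using eigenvalue_root_char_poly[OF A] by simp
    thus False using no_real_eig[OF A sq] by simp
  qed
  have "det A = 1"
  proof -
    have "(det A - 1) * (det A + 1) = 0" using d1 by (simp add: algebra_simps)
    thus ?thesis using pos by auto
  qed
  thus ?thesis using sm m by auto
qed

lemma block_decomp:
  fixes X :: "real mat" and lab :: "nat \<Rightarrow> real"
  assumes "X \<in> carrier_mat N N" "transpose_mat X = - X"
    "X * X = mat N N (\<lambda>(i, j). if i = j then lab i else 0)"
    "\<forall>i j. i \<le> j \<longrightarrow> j < N \<longrightarrow> lab i \<le> lab j"
    "\<forall>i<N. lab i \<le> 0"
    "\<forall>i j. i < N \<longrightarrow> j < N \<longrightarrow> lab i \<noteq> lab j \<longrightarrow> X $$ (i, j) = 0"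
  shows "\<exists>bs. (\<forall>(w, A)\<in>set bs. w > 0 \<and> so_SO_block A \<and> (\<exists>i<N. lab i = -(w * w)))
     \<and> distinct (map fst bs)
     \<and> sum_list (map (\<lambda>(w, A). dim_row A) bs) \<le> N
     \<and> X = diag_block_mat (map (\<lambda>(w, A). w \<cdot>\<^sub>m A) bs @
         [0\<^sub>m (N - sum_list (map (\<lambda>(w, A). dim_row A) bs)) (N - sum_list (map (\<lambda>(w, A). dim_row A) bs))])"
  using assms
proof (induction N arbitrary: X lab rule: less_induct)
  case (less N)
  note X = less.prems(1) and skew = less.prems(2) and sq = less.prems(3)
    and mono = less.prems(4) and nonpos = less.prems(5) and zero = less.prems(6)
  show ?case
  proof (cases "N = 0 \<or> lab 0 = 0")
    case True
    have lab0: "lab k = 0" if "k < N" for k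
    proof -
      have "N \<noteq> 0" using that by simp
      hence "lab 0 = 0" using True by simp
      moreover have "lab 0 \<le> lab k" using mono that by simp
      ultimately show ?thesis using nonpos that by force
    qed
    have "X = 0\<^sub>m N N"
    proof (rule eq_matI)
      fix i j assume "i < dim_row (0\<^sub>m N N :: real mat)" "j < dim_col (0\<^sub>m N N :: real mat)"
      hence ij: "i < N" "j < N" by auto
      have "(X * X) $$ (i, i) = 0" using sq lab0 ij by simp
      hence s0: "(\<Sum>l\<in>{0..<N}. (X $$ (i, l))\<^sup>2) = 0" using skew_sq_diag[OF X skew ij(1)] by simp
      have "\<forall>l\<in>{0..<N}. (X $$ (i, l))\<^sup>2 = 0"
        using sum_nonneg_eq_0_iff[of "{0..<N}" "\<lambda>l. (X $$ (i, l))\<^sup>2"] s0 by simp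
      thus "X $$ (i, j) = 0\<^sub>m N N $$ (i, j)" using ij by simp
    qed (use X in auto)
    thus ?thesis by (intro exI[of _ "[]"]) simp
  next
    case False
    hence N0: "N > 0" and v0: "lab 0 \<noteq> 0" by auto
    define v where "v = lab 0"
    have vneg: "v < 0" using nonpos N0 v0 unfolding v_def by force
    have ge: "v \<le> lab i" if "i < N" for i using mono that unfolding v_def by simp
    obtain s where s: "0 < s" "s \<le> N" and sprop: "\<forall>i<N. (i < s \<longleftrightarrow> lab i = v)"
    proof (cases "\<exists>i<N. lab i \<noteq> v")
      case True
      define s where "s = (LEAST i. i < N \<and> lab i \<noteq> v)"
      have s1: "s < N \<and> lab s \<noteq> v" unfolding s_def by (rule LeastI_ex) (use True in blast)
      have s2: "lab i = v" if "i < s" for i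
        using not_less_Least[of i "\<lambda>i. i < N \<and> lab i \<noteq> v"] that s1 unfolding s_def by auto
      have s3: "lab i \<noteq> v" if "s \<le> i" "i < N" for i
      proof -
        have "lab s \<le> lab i" using mono that by simp
        moreover have "v < lab s" using ge[of s] s1 by simp
        ultimately show ?thesis by simp
      qed
      have "0 < s" using s1 v_def by (cases s) auto
      moreover have "\<forall>i<N. (i < s \<longleftrightarrow> lab i = v)" using s2 s3 not_le by blast
      ultimately show ?thesis using s1 by (intro that[of s]) auto
    next
      case False
      show ?thesis by (rule that[of N]) (use False N0 in auto)
    qed
    have offz: "X $$ (i, j) = 0" if "i < N" "j < N" "(i < s) \<noteq> (j < s)" for i j
    proof -
      have a: "(i < s) = (lab i = v)" "(j < s) = (lab j = v)" using sprop that by auto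
      hence "lab i \<noteq> lab j" using that(3) by auto
      thus ?thesis using zero that by auto
    qed
    obtain X1 X2 X3 X4 where sb: "split_block X s s = (X1, X2, X3, X4)"
      by (cases "split_block X s s") auto
    have dimX: "dim_row X = s + (N - s)" "dim_col X = s + (N - s)" using X s by auto
    note spl = split_block[OF sb dimX]
    have X1e: "X1 = mat s s (\<lambda>ij. X $$ ij)" and X2e: "X2 = mat s (N - s) (\<lambda>(i,j). X $$ (i, j + s))"
      and X3e: "X3 = mat (N - s) s (\<lambda>(i,j). X $$ (i + s, j))"
      and X4e: "X4 = mat (N - s) (N - s) (\<lambda>(i,j). X $$ (i + s, j + s))"
      using sb X unfolding split_block_def Let_def by auto
    have X2z: "X2 = 0\<^sub>m s (N - s)"
    proof (rule eq_matI)
      fix i j assume "i < dim_row (0\<^sub>m s (N - s) :: real mat)" "j < dim_col (0\<^sub>m s (N - s) :: real mat)"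
      thus "X2 $$ (i, j) = 0\<^sub>m s (N - s) $$ (i, j)" unfolding X2e using offz[of i "j + s"] s by auto
    qed (auto simp: X2e)
    have X3z: "X3 = 0\<^sub>m (N - s) s"
    proof (rule eq_matI)
      fix i j assume "i < dim_row (0\<^sub>m (N - s) s :: real mat)" "j < dim_col (0\<^sub>m (N - s) s :: real mat)"
      thus "X3 $$ (i, j) = 0\<^sub>m (N - s) s $$ (i, j)" unfolding X3e using offz[of "i + s" j] s by auto
    qed (auto simp: X3e)
    have c1: "X1 \<in> carrier_mat s s" "X4 \<in> carrier_mat (N - s) (N - s)" using spl by auto
    have d: "dim_row X1 = s" "dim_col X1 = s" "dim_row X4 = N - s" "dim_col X4 = N - s" using c1 by auto
    have "X * X = four_block_mat X1 X2 X3 X4 * four_block_mat X1 X2 X3 X4" using spl(5) by metis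
    also have "\<dots> = four_block_mat (X1 * X1 + X2 * X3) (X1 * X2 + X2 * X4) (X3 * X1 + X4 * X3) (X3 * X2 + X4 * X4)"
      by (rule mult_four_block_mat) (use spl in auto)
    finally have XX: "X * X = \<dots>" .
    have XX2: "X * X = four_block_mat (X1 * X1) (0\<^sub>m s (N-s)) (0\<^sub>m (N-s) s) (X4 * X4)"
      unfolding XX X2z X3z using c1 d by simp
    have X1sq: "X1 * X1 = v \<cdot>\<^sub>m 1\<^sub>m s"
    proof (rule eq_matI)
      fix i j assume "i < dim_row (v \<cdot>\<^sub>m 1\<^sub>m s :: real mat)" "j < dim_col (v \<cdot>\<^sub>m 1\<^sub>m s :: real mat)"
      hence ij: "i < s" "j < s" by auto
      have "(X * X) $$ (i, j) = (X1 * X1) $$ (i, j)" unfolding XX2 using ij d by simp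
      moreover have "(X * X) $$ (i, j) = (if i = j then lab i else 0)" using sq ij s by simp
      moreover have "lab i = v"
      proof -
        have "i < N" using ij s by simp
        thus ?thesis using sprop ij by blast
      qed
      ultimately have "(X1 * X1) $$ (i, j) = (if i = j then v else 0)" by (cases "i = j") auto
      thus "(X1 * X1) $$ (i, j) = (v \<cdot>\<^sub>m 1\<^sub>m s) $$ (i, j)" using ij by simp
    qed (use d in auto)
    have X1skew: "X1 $$ (j, i) = - X1 $$ (i, j)" if "i < s" "j < s" for i j
      using skew_entry[OF X skew, of i j] that s unfolding X1e by auto
    have sk4: "transpose_mat X4 = - X4"
    proof (rule eq_matI)
      fix i j assume "i < dim_row (- X4)" "j < dim_col (- X4)"
      hence ij: "i < N - s" "j < N - s" using d by auto
      have "X $$ (j + s, i + s) = - X $$ (i + s, j + s)" using skew_entry[OF X skew, of "i + s" "j + s"] ij by auto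
      thus "transpose_mat X4 $$ (i, j) = (- X4) $$ (i, j)" using ij unfolding X4e by simp
    qed (use d in auto)
    have sq4: "X4 * X4 = mat (N - s) (N - s) (\<lambda>(i, j). if i = j then lab (i + s) else 0)"
    proof (rule eq_matI)
      fix i j assume "i < dim_row (mat (N - s) (N - s) (\<lambda>(i, j). if i = j then lab (i + s) else 0))"
        "j < dim_col (mat (N - s) (N - s) (\<lambda>(i, j). if i = j then lab (i + s) else 0))"
      hence ij: "i < N - s" "j < N - s" by auto
      have "(X * X) $$ (i + s, j + s) = (X4 * X4) $$ (i, j)" unfolding XX2 using ij d by simp
      moreover have "(X * X) $$ (i + s, j + s) = (if i = j then lab (i + s) else 0)" using sq ij by simp
      ultimately show "(X4 * X4) $$ (i, j) = mat (N - s) (N - s) (\<lambda>(i, j). if i = j then lab (i + s) else 0) $$ (i, j)"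
        using ij by simp
    qed (use d in auto)
    have mono4: "\<forall>i j. i \<le> j \<longrightarrow> j < N - s \<longrightarrow> lab (i + s) \<le> lab (j + s)" using mono by auto
    have nonpos4: "\<forall>i<N - s. lab (i + s) \<le> 0" using nonpos by auto
    have zero4: "\<forall>i j. i < N - s \<longrightarrow> j < N - s \<longrightarrow> lab (i + s) \<noteq> lab (j + s) \<longrightarrow> X4 $$ (i, j) = 0"
      using zero unfolding X4e by auto
    have ltN: "N - s < N" using s by simp
    from less.IH[OF ltN c1(2) sk4 sq4 mono4 nonpos4 zero4]
    obtain bs' where P1: "\<forall>(w, A)\<in>set bs'. w > 0 \<and> so_SO_block A \<and> (\<exists>i<N - s. lab (i + s) = -(w * w))"
      and P2: "distinct (map fst bs')"
      and P3: "sum_list (map (\<lambda>(w, A). dim_row A) bs') \<le> N - s"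
      and P4: "X4 = diag_block_mat (map (\<lambda>(w, A). w \<cdot>\<^sub>m A) bs' @
         [0\<^sub>m (N - s - sum_list (map (\<lambda>(w, A). dim_row A) bs')) (N - s - sum_list (map (\<lambda>(w, A). dim_row A) bs'))])"
      by blast
    define w where "w = sqrt (- v)"
    have w: "w > 0" "w * w = - v" using vneg unfolding w_def by auto
    hence vw: "v = - (w * w)" by simp
    define A where "A = (1 / w) \<cdot>\<^sub>m X1"
    have cA: "A \<in> carrier_mat s s" unfolding A_def using c1 by simp
    have skA: "transpose_mat A = - A"
    proof (rule eq_matI)
      fix i j assume "i < dim_row (- A)" "j < dim_col (- A)"
      hence ij: "i < s" "j < s" using cA by auto
      show "transpose_mat A $$ (i, j) = (- A) $$ (i, j)"
        using ij X1skew[OF ij] unfolding A_def using d by simp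
    qed (use cA in auto)
    have "A * A = (1 / w) \<cdot>\<^sub>m ((1 / w) \<cdot>\<^sub>m (X1 * X1))"
    proof -
      have e1: "(1/w) \<cdot>\<^sub>m X1 * ((1/w) \<cdot>\<^sub>m X1) = (1/w) \<cdot>\<^sub>m (X1 * ((1/w) \<cdot>\<^sub>m X1))"
        by (rule mult_smult_assoc_mat) (use c1 in auto)
      have e2: "X1 * ((1/w) \<cdot>\<^sub>m X1) = (1/w) \<cdot>\<^sub>m (X1 * X1)"
        by (rule mult_smult_distrib) (use c1 in auto)
      show ?thesis unfolding A_def e1 e2 ..
    qed
    also have "\<dots> = - (1\<^sub>m s)"
      by (rule eq_matI) (use w in \<open>auto simp: X1sq vw field_simps\<close>)
    finally have sqA: "A * A = - (1\<^sub>m s)" .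
    obtain m where m: "m > 0" "s = 2 * m" "det A = 1"
      using skew_orth_det[OF cA s(1) skA sqA] by blast
    have orthA: "transpose_mat A * A = 1\<^sub>m s"
    proof -
      have "transpose_mat A * A = - (A * A)" unfolding skA by (rule uminus_mult_left_mat) (use cA in simp)
      also have "\<dots> = 1\<^sub>m s" unfolding sqA by (rule eq_matI) auto
      finally show ?thesis .
    qed
    have soA: "so_SO_block A"
      unfolding so_SO_block_def skew_mat_def orth_mat_def
      using m cA skA orthA by auto
    have wA: "w \<cdot>\<^sub>m A = X1" unfolding A_def by (rule eq_matI) (use w c1 in auto)
    have dA: "dim_row A = s" using cA by simp
    have P4': "diag_block_mat (map (\<lambda>(w, A). w \<cdot>\<^sub>m A) bs' @
         [0\<^sub>m (N - s - sum_list (map (\<lambda>(w, A). dim_row A) bs')) (N - s - sum_list (map (\<lambda>(w, A). dim_row A) bs'))]) = X4"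
      using P4 by simp
    have rr: "N - sum_list (map (\<lambda>(w, A). dim_row A) ((w, A) # bs')) = N - s - sum_list (map (\<lambda>(w, A). dim_row A) bs')"
      using dA by simp
    have eqX: "X = diag_block_mat (map (\<lambda>(w, A). w \<cdot>\<^sub>m A) ((w, A) # bs') @
         [0\<^sub>m (N - sum_list (map (\<lambda>(w, A). dim_row A) ((w, A) # bs'))) (N - sum_list (map (\<lambda>(w, A). dim_row A) ((w, A) # bs')))])"
      unfolding rr using P4' wA d spl(5) X2z X3z by (simp add: Let_def)
    have Q1: "\<forall>(w', A')\<in>set ((w, A) # bs'). w' > 0 \<and> so_SO_block A' \<and> (\<exists>i<N. lab i = -(w' * w'))"
    proof -
      have "lab 0 = - (w * w)" using vw v_def by simp
      hence h: "\<exists>i<N. lab i = -(w * w)" using N0 by blast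
      have t: "\<exists>i<N. lab i = -(w' * w')" if "(w', A') \<in> set bs'" for w' A'
      proof -
        from bspec[OF P1 that] obtain i where "i < N - s" "lab (i + s) = -(w' * w')" by auto
        thus ?thesis by (intro exI[of _ "i + s"]) auto
      qed
      show ?thesis
      proof
        fix x assume x: "x \<in> set ((w, A) # bs')"
        show "case x of (w', A') \<Rightarrow> w' > 0 \<and> so_SO_block A' \<and> (\<exists>i<N. lab i = -(w' * w'))"
        proof (cases "x = (w, A)")
          case True thus ?thesis using h w soA by simp
        next
          case False
          then obtain w' A' where xw: "x = (w', A')" "(w', A') \<in> set bs'" using x by (cases x) auto
          from bspec[OF P1 xw(2)] t[OF xw(2)] show ?thesis unfolding xw by auto
        qed
      qed
    qed
    have Q2: "distinct (map fst ((w, A) # bs'))"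
    proof -
      have "w \<notin> fst ` set bs'"
      proof
        assume "w \<in> fst ` set bs'"
        then obtain A' where "(w, A') \<in> set bs'" by auto
        from bspec[OF P1 this] obtain i where i: "i < N - s" "lab (i + s) = -(w * w)" by auto
        hence "lab (i + s) = v" using vw by simp
        moreover have "i + s < N" using i s by simp
        hence "(i + s < s) = (lab (i + s) = v)" using sprop by blast
        ultimately show False by simp
      qed
      thus ?thesis using P2 by simp
    qed
    have Q3: "sum_list (map (\<lambda>(w, A). dim_row A) ((w, A) # bs')) \<le> N"
      using P3 dA s by simp
    show ?thesis using Q1 Q2 Q3 eqX by blast
  qed
qed

lemma conj_entry:
  fixes Q X :: "real mat"
  assumes "Q \<in> carrier_mat n n" "X \<in> carrier_mat n n" "a < n" "b < n"
  shows "(transpose_mat Q * X * Q) $$ (a, b) = col Q a \<bullet> (X *\<^sub>v col Q b)"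
proof -
  have "transpose_mat Q * X * Q = transpose_mat Q * (X * Q)"
    using assms by (intro assoc_mult_mat) auto
  thus ?thesis using assms by (simp add: mult_mat_vec_def)
qed

lemma QQZ:
  fixes Q Z :: "real mat"
  assumes Q: "Q \<in> carrier_mat n n" and QQ: "Q * transpose_mat Q = 1\<^sub>m n" and Z: "Z \<in> carrier_mat n k"
  shows "Q * (transpose_mat Q * Z) = Z"
proof -
  have "Q * (transpose_mat Q * Z) = (Q * transpose_mat Q) * Z"
    using Q Z by (intro assoc_mult_mat[symmetric]) auto
  also have "\<dots> = Z" unfolding QQ using Z by simp
  finally show ?thesis .
qed

lemma conj_mult:
  fixes Q X Y :: "real mat"
  assumes Q: "Q \<in> carrier_mat n n" and QQ: "Q * transpose_mat Q = 1\<^sub>m n"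
    and X: "X \<in> carrier_mat n n" and Y: "Y \<in> carrier_mat n n"
  shows "(transpose_mat Q * X * Q) * (transpose_mat Q * Y * Q) = transpose_mat Q * (X * Y) * Q"
proof -
  let ?T = "transpose_mat Q"
  have T: "?T \<in> carrier_mat n n" using Q by simp
  have 1: "?T * Y * Q = ?T * (Y * Q)" using T Q Y by (intro assoc_mult_mat) auto
  have 2: "Q * (?T * (Y * Q)) = Y * Q" using QQZ[OF Q QQ, of "Y * Q" n] Y Q by simp
  have "(?T * X * Q) * (?T * Y * Q) = (?T * X) * (Q * (?T * Y * Q))"
    using T Q X Y by (intro assoc_mult_mat) auto
  also have "\<dots> = (?T * X) * (Y * Q)" unfolding 1 2 ..
  also have "\<dots> = ?T * X * Y * Q"
    using T Q X Y by (metis assoc_mult_mat mult_carrier_mat)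
  also have "\<dots> = ?T * (X * Y) * Q"
    using T X Y by (metis assoc_mult_mat)
  finally show ?thesis .
qed

lemma conj_back:
  fixes Q Z Z' :: "real mat"
  assumes Q: "Q \<in> carrier_mat n n" and QQ: "Q * transpose_mat Q = 1\<^sub>m n"
    and Z: "Z \<in> carrier_mat n n" and Z': "Z' \<in> carrier_mat n n"
    and eq: "transpose_mat Q * Z * Q = transpose_mat Q * Z' * Q"
  shows "Z = Z'"
proof -
  let ?T = "transpose_mat Q"
  have T: "?T \<in> carrier_mat n n" using Q by simp
  have bk: "Q * (?T * W * Q) * ?T = W" if W: "W \<in> carrier_mat n n" for W
  proof -
    have "Q * (?T * W * Q) * ?T = Q * (?T * (W * Q)) * ?T"
      using T Q W by (subst assoc_mult_mat[of ?T n n W n Q n]) auto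
    also have "Q * (?T * (W * Q)) = W * Q" using QQZ[OF Q QQ, of "W * Q" n] W Q by simp
    also have "W * Q * ?T = W * (Q * ?T)" using W Q T by (intro assoc_mult_mat) auto
    also have "\<dots> = W" unfolding QQ using W by simp
    finally show ?thesis .
  qed
  have "Z = Q * (?T * Z * Q) * ?T" using bk[OF Z] by simp
  also have "\<dots> = Q * (?T * Z' * Q) * ?T" unfolding eq ..
  also have "\<dots> = Z'" using bk[OF Z'] .
  finally show ?thesis .
qed

lemma conj_comm:
  fixes Q X Y :: "real mat"
  assumes Q: "Q \<in> carrier_mat n n" and QQ: "Q * transpose_mat Q = 1\<^sub>m n"
    and X: "X \<in> carrier_mat n n" and Y: "Y \<in> carrier_mat n n"
  shows "X * Y = Y * X \<longleftrightarrow>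
    (transpose_mat Q * X * Q) * (transpose_mat Q * Y * Q) = (transpose_mat Q * Y * Q) * (transpose_mat Q * X * Q)"
  unfolding conj_mult[OF Q QQ X Y] conj_mult[OF Q QQ Y X]
  using conj_back[OF Q QQ, of "X * Y" "Y * X"] X Y by auto

lemma eig_basis:
  fixes J W :: "real mat"
  assumes sym: "symmetric_mat n J" and card: "card {e. eigenvalue J e} = n"
    and W: "W \<in> carrier_mat n n"
  shows "\<exists>Q. orth_mat n Q \<and> Q * transpose_mat Q = 1\<^sub>m n \<and> diagonal_mat (transpose_mat Q * J * Q)
    \<and> (\<forall>a<n. \<forall>b<n. a \<noteq> b \<longrightarrow> (transpose_mat Q * J * Q) $$ (a, a) \<noteq> (transpose_mat Q * J * Q) $$ (b, b))
    \<and> (\<forall>a b. a \<le> b \<longrightarrow> b < n \<longrightarrow> (transpose_mat Q * W * Q) $$ (a, a) \<le> (transpose_mat Q * W * Q) $$ (b, b))"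
proof -
  have Jc: "J \<in> carrier_mat n n" and Jt: "transpose_mat J = J" using sym unfolding symmetric_mat_def by auto
  define E where "E = {e. eigenvalue J e}"
  have fin: "finite E"
  proof (cases "n = 0")
    case True
    have "E = {}"
    proof (rule ccontr)
      assume "E \<noteq> {}"
      then obtain e v where "eigenvector J v e" unfolding E_def eigenvalue_def by auto
      hence v: "v \<in> carrier_vec 0" "v \<noteq> 0\<^sub>v 0" using Jc True unfolding eigenvector_def by auto
      moreover have "v = 0\<^sub>v 0" using v(1) by (intro eq_vecI) auto
      ultimately show False by simp
    qed
    thus ?thesis by simp
  next
    case False
    thus ?thesis using card card_ge_0_finite[of E] unfolding E_def by auto
  qed
  have cardE: "card E = n" using card unfolding E_def .
  define ev where "ev e = (SOME v. eigenvector J v e)" for e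
  have evp: "eigenvector J (ev e) e" if "e \<in> E" for e
    using that unfolding E_def eigenvalue_def ev_def by (auto intro: someI_ex)
  have evc: "ev e \<in> carrier_vec n" "ev e \<noteq> 0\<^sub>v n" "J *\<^sub>v ev e = e \<cdot>\<^sub>v ev e" if "e \<in> E" for e
    using evp[OF that] Jc unfolding eigenvector_def by auto
  define u where "u e = (1 / sqrt (ev e \<bullet> ev e)) \<cdot>\<^sub>v ev e" for e
  have uc: "u e \<in> carrier_vec n" if "e \<in> E" for e using evc[OF that] unfolding u_def by simp
  have uJ: "J *\<^sub>v u e = e \<cdot>\<^sub>v u e" if "e \<in> E" for e
  proof -
    have "J *\<^sub>v u e = (1 / sqrt (ev e \<bullet> ev e)) \<cdot>\<^sub>v (J *\<^sub>v ev e)"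
      unfolding u_def using mult_mat_vec[OF Jc evc(1)[OF that]] .
    also have "\<dots> = e \<cdot>\<^sub>v u e" unfolding evc(3)[OF that] u_def
      by (rule eq_vecI) (use evc[OF that] in auto)
    finally show ?thesis .
  qed
  have uu: "u e \<bullet> u e = 1" if "e \<in> E" for e
  proof -
    define p where "p = ev e \<bullet> ev e"
    have p: "p > 0" unfolding p_def using self_prod_pos evc[OF that] by blast
    have "u e \<bullet> u e = (1 / sqrt p) * ((1 / sqrt p) * p)"
      unfolding u_def p_def
      using smult_scalar_prod_distrib[OF _ smult_carrier_vec[THEN iffD2, OF evc(1)[OF that]]]
        scalar_prod_smult_distrib[OF evc(1)[OF that] evc(1)[OF that]] evc(1)[OF that] by simp
    also have "\<dots> = 1" using p by (simp add: field_simps)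
    finally show ?thesis .
  qed
  have uo: "u e \<bullet> u f = 0" if "e \<in> E" "f \<in> E" "e \<noteq> f" for e f
  proof -
    have "e * (u e \<bullet> u f) = (e \<cdot>\<^sub>v u e) \<bullet> u f"
      using smult_scalar_prod_distrib[OF uc[OF that(1)] uc[OF that(2)]] by simp
    also have "\<dots> = (transpose_mat J *\<^sub>v u e) \<bullet> u f" unfolding Jt uJ[OF that(1)] ..
    also have "\<dots> = u e \<bullet> (J *\<^sub>v u f)" by (rule transpose_vec_mult_scalar[OF Jc uc[OF that(2)] uc[OF that(1)]])
    also have "\<dots> = f * (u e \<bullet> u f)" unfolding uJ[OF that(2)]
      using scalar_prod_smult_distrib[OF uc[OF that(1)] uc[OF that(2)]] by simp
    finally have "(e - f) * (u e \<bullet> u f) = 0" by (simp add: algebra_simps)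
    thus ?thesis using that by simp
  qed
  define c where "c e = u e \<bullet> (W *\<^sub>v u e)" for e
  define L where "L = sort_key c (sorted_list_of_set E)"
  have setL: "set L = E" and lenL: "length L = n" and distL: "distinct L" and sortL: "sorted (map c L)"
    unfolding L_def using fin cardE by auto
  have LE: "L ! a \<in> E" if "a < n" for a using setL lenL that nth_mem by blast
  define Q where "Q = mat_of_cols n (map u L)"
  have Qc: "Q \<in> carrier_mat n n" unfolding Q_def using lenL by auto
  have colQ: "col Q a = u (L ! a)" if "a < n" for a
    unfolding Q_def using that lenL uc[OF LE[OF that]] by simp
  have Lne: "L ! a \<noteq> L ! b" if "a < n" "b < n" "a \<noteq> b" for a b
    using distL lenL that by (simp add: nth_eq_iff_index_eq)
  have TQ: "transpose_mat Q * Q = 1\<^sub>m n"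
  proof (rule eq_matI)
    fix a b assume "a < dim_row (1\<^sub>m n :: real mat)" "b < dim_col (1\<^sub>m n :: real mat)"
    hence ab: "a < n" "b < n" by auto
    have "(transpose_mat Q * Q) $$ (a, b) = col Q a \<bullet> col Q b" using ab Qc by simp
    also have "\<dots> = u (L ! a) \<bullet> u (L ! b)" using colQ ab by simp
    also have "\<dots> = (if a = b then 1 else 0)" using uu uo LE Lne ab by auto
    finally show "(transpose_mat Q * Q) $$ (a, b) = 1\<^sub>m n $$ (a, b)" using ab by simp
  qed (use Qc in auto)
  have QT: "Q * transpose_mat Q = 1\<^sub>m n"
    by (rule mat_mult_left_right_inverse[OF _ Qc TQ]) (use Qc in simp)
  have Dent: "(transpose_mat Q * J * Q) $$ (a, b) = (if a = b then L ! a else 0)" if "a < n" "b < n" for a b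
  proof -
    have "(transpose_mat Q * J * Q) $$ (a, b) = u (L ! a) \<bullet> (J *\<^sub>v u (L ! b))"
      using conj_entry[OF Qc Jc that] colQ that by simp
    also have "\<dots> = (L ! b) * (u (L ! a) \<bullet> u (L ! b))"
      unfolding uJ[OF LE[OF that(2)]]
      using scalar_prod_smult_distrib[OF uc[OF LE[OF that(1)]] uc[OF LE[OF that(2)]]] by simp
    also have "\<dots> = (if a = b then L ! a else 0)" using uu uo LE Lne that by auto
    finally show ?thesis .
  qed
  have Went: "(transpose_mat Q * W * Q) $$ (a, a) = c (L ! a)" if "a < n" for a
    using conj_entry[OF Qc W that that] colQ that unfolding c_def by simp
  have "orth_mat n Q" unfolding orth_mat_def using Qc TQ by simp
  moreover have "diagonal_mat (transpose_mat Q * J * Q)"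
    unfolding diagonal_mat_def using Qc Jc Dent by auto
  moreover have "\<forall>a<n. \<forall>b<n. a \<noteq> b \<longrightarrow> (transpose_mat Q * J * Q) $$ (a, a) \<noteq> (transpose_mat Q * J * Q) $$ (b, b)"
    using Dent Lne by auto
  moreover have "\<forall>a b. a \<le> b \<longrightarrow> b < n \<longrightarrow> (transpose_mat Q * W * Q) $$ (a, a) \<le> (transpose_mat Q * W * Q) $$ (b, b)"
  proof (intro allI impI)
    fix a b assume ab: "a \<le> b" "b < n"
    have "map c L ! a \<le> map c L ! b" using sorted_nth_mono[OF sortL ab(1)] ab lenL by simp
    thus "(transpose_mat Q * W * Q) $$ (a, a) \<le> (transpose_mat Q * W * Q) $$ (b, b)"
      using Went ab lenL by simp
  qed
  ultimately show ?thesis using QT by blast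
qed

lemma conj_carrier:
  fixes Q X :: "real mat"
  assumes Q: "Q \<in> carrier_mat n n" and X: "X \<in> carrier_mat n n"
  shows "transpose_mat Q * X * Q \<in> carrier_mat n n"
proof -
  have T: "transpose_mat Q \<in> carrier_mat n n" using Q by simp
  show ?thesis by (rule mult_carrier_mat[OF mult_carrier_mat[OF T X] Q])
qed

lemma diag_block_diagonal:
  assumes "\<forall>A\<in>set As. diagonal_mat A \<and> square_mat A"
  shows "diagonal_mat (diag_block_mat As)"
  using assms
proof (induction As)
  case Nil thus ?case by (simp add: diagonal_mat_def)
next
  case (Cons A As)
  hence dA: "diagonal_mat A" "dim_col A = dim_row A" and IH: "diagonal_mat (diag_block_mat As)" by auto
  have "square_mat (diag_block_mat As)" using Cons.prems by (intro diag_block_mat_square) auto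
  hence sqB: "dim_col (diag_block_mat As) = dim_row (diag_block_mat As)" by simp
  show ?case using dA IH sqB unfolding diagonal_mat_def by (auto simp: Let_def)
qed

lemma diag_mat_diag_block:
  assumes "\<forall>A\<in>set As. square_mat A"
  shows "diag_mat (diag_block_mat As) = concat (map diag_mat As)"
  using assms
proof (induction As)
  case Nil thus ?case by (simp add: diag_mat_def)
next
  case (Cons A As)
  have pr: "\<forall>A\<in>set As. square_mat A" "square_mat A" using Cons.prems by auto
  have IH: "diag_mat (diag_block_mat As) = concat (map diag_mat As)" using Cons.IH pr(1) by blast
  have "square_mat (diag_block_mat As)" using pr(1) by (intro diag_block_mat_square) blast
  hence sq2: "dim_col (diag_block_mat As) = dim_row (diag_block_mat As)" by (simp only: square_mat.simps)
  have c2: "diag_block_mat As \<in> carrier_mat (dim_row (diag_block_mat As)) (dim_row (diag_block_mat As))"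
    by (rule carrier_matI[OF refl sq2])
  have sq1: "dim_col A = dim_row A" using pr(2) by (simp only: square_mat.simps)
  have c1: "A \<in> carrier_mat (dim_row A) (dim_row A)" by (rule carrier_matI[OF refl sq1])
  show ?case unfolding diag_block_mat.simps Let_def using diag_four_block_mat[OF c1 c2] IH by simp
qed

lemma diag_mat_smult_one: "diag_mat ((c::real) \<cdot>\<^sub>m 1\<^sub>m d) = replicate d c"
  by (rule nth_equalityI) (auto simp: diag_mat_def)

lemma diag_mat_zero: "diag_mat (0\<^sub>m d d :: real mat) = replicate d 0"
  by (rule nth_equalityI) (auto simp: diag_mat_def)

lemma so_block_props:
  fixes A :: "real mat"
  assumes "so_SO_block A"
  shows "A \<in> carrier_mat (dim_row A) (dim_row A)" "dim_row A > 0" "A * A = - 1\<^sub>m (dim_row A)"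
proof -
  obtain m where m: "m > 0" "skew_mat (2 * m) A" "orth_mat (2 * m) A" using assms unfolding so_SO_block_def by blast
  have Ac: "A \<in> carrier_mat (2 * m) (2 * m)" and sk: "transpose_mat A = - A" and or: "transpose_mat A * A = 1\<^sub>m (2 * m)"
    using m unfolding skew_mat_def orth_mat_def by auto
  have d: "dim_row A = 2 * m" using Ac by simp
  show "A \<in> carrier_mat (dim_row A) (dim_row A)" using Ac d by simp
  show "dim_row A > 0" using d m by simp
  have "- (A * A) = 1\<^sub>m (2 * m)" using or unfolding sk by (subst uminus_mult_left_mat[symmetric]) (use Ac in auto)
  hence h: "(- (A * A)) $$ (i, j) = 1\<^sub>m (2 * m) $$ (i, j)" for i j by simp
  show "A * A = - 1\<^sub>m (dim_row A)"
  proof (rule eq_matI)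
    fix i j assume ij: "i < dim_row (- 1\<^sub>m (dim_row A) :: real mat)" "j < dim_col (- 1\<^sub>m (dim_row A) :: real mat)"
    hence ij': "i < 2 * m" "j < 2 * m" using d by auto
    have "(- (A * A)) $$ (i, j) = - ((A * A) $$ (i, j))" using Ac ij' by simp
    thus "(A * A) $$ (i, j) = (- 1\<^sub>m (dim_row A)) $$ (i, j)" using h[of i j] ij' d by simp
  qed (use Ac d in auto)
qed

lemma pow2_mat: "B \<in> carrier_mat k k \<Longrightarrow> B ^\<^sub>m 2 = B * B"
  by (simp add: numeral_2_eq_2)

lemma block_sq:
  fixes A :: "real mat"
  assumes "so_SO_block A"
  shows "(w \<cdot>\<^sub>m A) ^\<^sub>m 2 = (- (w * w)) \<cdot>\<^sub>m 1\<^sub>m (dim_row A)"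
proof -
  note p = so_block_props[OF assms]
  let ?d = "dim_row A"
  have c: "w \<cdot>\<^sub>m A \<in> carrier_mat ?d ?d" using p(1) by (rule smult_carrier_mat)
  have e1: "(w \<cdot>\<^sub>m A) * (w \<cdot>\<^sub>m A) = w \<cdot>\<^sub>m (A * (w \<cdot>\<^sub>m A))"
    by (rule mult_smult_assoc_mat[OF p(1) c])
  have e2: "A * (w \<cdot>\<^sub>m A) = w \<cdot>\<^sub>m (A * A)"
    by (rule mult_smult_distrib[OF p(1) p(1)])
  have "(w \<cdot>\<^sub>m A) ^\<^sub>m 2 = w \<cdot>\<^sub>m (w \<cdot>\<^sub>m (A * A))" unfolding pow2_mat[OF c] e1 e2 ..
  also have "\<dots> = (- (w * w)) \<cdot>\<^sub>m 1\<^sub>m ?d" unfolding p(3) by (rule eq_matI) auto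
  finally show ?thesis .
qed

lemma bf_square:
  fixes J \<Omega> Q :: "real mat"
  assumes bf: "block_form n J \<Omega> Q bs" and Oc: "\<Omega> \<in> carrier_mat n n"
  shows "transpose_mat Q * (\<Omega> * \<Omega>) * Q = diag_block_mat (map (\<lambda>(w, A). (- (w * w)) \<cdot>\<^sub>m 1\<^sub>m (dim_row A)) bs @
     [0\<^sub>m (n - sum_list (map (\<lambda>(w, A). dim_row A) bs)) (n - sum_list (map (\<lambda>(w, A). dim_row A) bs))])"
proof -
  let ?r = "n - sum_list (map (\<lambda>(w, A). dim_row A) bs)"
  let ?Bs = "map (\<lambda>(w, A). w \<cdot>\<^sub>m A) bs @ [0\<^sub>m ?r ?r]"
  have Qc: "Q \<in> carrier_mat n n" and TQ: "transpose_mat Q * Q = 1\<^sub>m n"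
    using bf unfolding block_form_def orth_mat_def by auto
  have QQ: "Q * transpose_mat Q = 1\<^sub>m n"
    by (rule mat_mult_left_right_inverse[OF _ Qc TQ]) (use Qc in simp)
  have Beq: "transpose_mat Q * \<Omega> * Q = diag_block_mat ?Bs" using bf unfolding block_form_def by blast
  have bsp: "\<forall>(w, A)\<in>set bs. w > 0 \<and> so_SO_block A" using bf unfolding block_form_def by blast
  have Bc: "transpose_mat Q * \<Omega> * Q \<in> carrier_mat n n" using conj_carrier[OF Qc Oc] .
  have sq: "Ball (set ?Bs) square_mat"
  proof
    fix X assume "X \<in> set ?Bs"
    then consider "X = 0\<^sub>m ?r ?r" | w A where "(w, A) \<in> set bs" "X = w \<cdot>\<^sub>m A" by auto
    thus "square_mat X"
    proof cases
      case 2
      from bspec[OF bsp 2(1)] have "so_SO_block A" by simp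
      hence "A \<in> carrier_mat (dim_row A) (dim_row A)" by (rule so_block_props(1))
      hence "dim_col A = dim_row A" by blast
      thus ?thesis using 2(2) by simp
    qed simp
  qed
  have "transpose_mat Q * (\<Omega> * \<Omega>) * Q = (transpose_mat Q * \<Omega> * Q) * (transpose_mat Q * \<Omega> * Q)"
    using conj_mult[OF Qc QQ Oc Oc] by simp
  also have "\<dots> = (transpose_mat Q * \<Omega> * Q) ^\<^sub>m 2" using pow2_mat[OF Bc] by simp
  also have "\<dots> = diag_block_mat (map (\<lambda>A. A ^\<^sub>m 2) ?Bs)" unfolding Beq by (rule diag_block_pow_mat[OF sq])
  also have "map (\<lambda>A. A ^\<^sub>m 2) ?Bs = map (\<lambda>(w, A). (- (w * w)) \<cdot>\<^sub>m 1\<^sub>m (dim_row A)) bs @ [0\<^sub>m ?r ?r]"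
  proof -
    have "map (\<lambda>A. A ^\<^sub>m 2) (map (\<lambda>(w, A). w \<cdot>\<^sub>m A) bs) = map (\<lambda>(w, A). (- (w * w)) \<cdot>\<^sub>m 1\<^sub>m (dim_row A)) bs"
    proof (rule nth_equalityI)
      fix i assume "i < length (map (\<lambda>A. A ^\<^sub>m 2) (map (\<lambda>(w, A). w \<cdot>\<^sub>m A) bs))"
      hence i: "i < length bs" by simp
      obtain w A where wA: "bs ! i = (w, A)" by (cases "bs ! i") auto
      have "(w, A) \<in> set bs" using wA i nth_mem by metis
      hence "so_SO_block A" using bsp by auto
      thus "map (\<lambda>A. A ^\<^sub>m 2) (map (\<lambda>(w, A). w \<cdot>\<^sub>m A) bs) ! i = map (\<lambda>(w, A). (- (w * w)) \<cdot>\<^sub>m 1\<^sub>m (dim_row A)) bs ! i"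
        using i wA block_sq by simp
    qed simp
    moreover have "(0\<^sub>m ?r ?r :: real mat) ^\<^sub>m 2 = 0\<^sub>m ?r ?r"
      using pow2_mat[of "0\<^sub>m ?r ?r :: real mat" ?r] by simp
    ultimately show ?thesis by simp
  qed
  finally show ?thesis .
qed

lemma bf_square_diag:
  fixes J \<Omega> Q :: "real mat"
  assumes bf: "block_form n J \<Omega> Q bs" and Oc: "\<Omega> \<in> carrier_mat n n"
  shows "diagonal_mat (transpose_mat Q * (\<Omega> * \<Omega>) * Q)"
proof -
  have bsp: "\<forall>(w, A)\<in>set bs. w > 0 \<and> so_SO_block A" using bf unfolding block_form_def by blast
  show ?thesis unfolding bf_square[OF bf Oc]
  proof (rule diag_block_diagonal, intro ballI)
    fix X assume "X \<in> set (map (\<lambda>(w, A). (- (w * w)) \<cdot>\<^sub>m 1\<^sub>m (dim_row A)) bs @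
     [0\<^sub>m (n - sum_list (map (\<lambda>(w, A). dim_row A) bs)) (n - sum_list (map (\<lambda>(w, A). dim_row A) bs))])"
    then obtain c d where "X = c \<cdot>\<^sub>m 1\<^sub>m d \<or> X = 0\<^sub>m d d" by auto
    thus "diagonal_mat X \<and> square_mat X" by (auto simp: diagonal_mat_def)
  qed
qed

lemma equil_iff:
  fixes J \<Omega> M :: "real mat"
  assumes J: "J \<in> carrier_mat n n" and O: "\<Omega> \<in> carrier_mat n n" and M: "\<Omega> * J + J * \<Omega> = M"
  shows "M * \<Omega> - \<Omega> * M = 0\<^sub>m n n \<longleftrightarrow> J * (\<Omega> * \<Omega>) = (\<Omega> * \<Omega>) * J"
proof -
  have e1: "M * \<Omega> = \<Omega> * J * \<Omega> + J * \<Omega> * \<Omega>"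
    unfolding M[symmetric] by (rule add_mult_distrib_mat) (use J O in auto)
  have e2: "\<Omega> * M = \<Omega> * (\<Omega> * J) + \<Omega> * (J * \<Omega>)"
    unfolding M[symmetric] by (rule mult_add_distrib_mat) (use J O in auto)
  have a1: "\<Omega> * (J * \<Omega>) = \<Omega> * J * \<Omega>" using J O by (intro assoc_mult_mat[symmetric]) auto
  have a2: "\<Omega> * (\<Omega> * J) = \<Omega> * \<Omega> * J" using J O by (intro assoc_mult_mat[symmetric]) auto
  have a3: "J * \<Omega> * \<Omega> = J * (\<Omega> * \<Omega>)" using J O by (intro assoc_mult_mat) auto
  have id: "M * \<Omega> - \<Omega> * M = J * (\<Omega> * \<Omega>) - (\<Omega> * \<Omega>) * J"
    unfolding e1 e2 a1 a2 a3 by (rule eq_matI) (use J O in auto)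
  have X: "J * (\<Omega> * \<Omega>) \<in> carrier_mat n n" "(\<Omega> * \<Omega>) * J \<in> carrier_mat n n" using J O by auto
  have dd: "dim_row \<Omega> = n" "dim_col \<Omega> = n" "dim_row J = n" "dim_col J = n" using J O by auto
  show ?thesis unfolding id
  proof
    assume h: "J * (\<Omega> * \<Omega>) - \<Omega> * \<Omega> * J = 0\<^sub>m n n"
    show "J * (\<Omega> * \<Omega>) = \<Omega> * \<Omega> * J"
    proof (rule eq_matI)
      fix i j assume ij: "i < dim_row (\<Omega> * \<Omega> * J)" "j < dim_col (\<Omega> * \<Omega> * J)"
      have "(J * (\<Omega> * \<Omega>) - \<Omega> * \<Omega> * J) $$ (i, j) = 0" unfolding h using ij X dd by simp
      thus "(J * (\<Omega> * \<Omega>)) $$ (i, j) = (\<Omega> * \<Omega> * J) $$ (i, j)" using ij X dd by simp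
    qed (use X dd in auto)
  next
    assume h: "J * (\<Omega> * \<Omega>) = \<Omega> * \<Omega> * J"
    show "J * (\<Omega> * \<Omega>) - \<Omega> * \<Omega> * J = 0\<^sub>m n n" unfolding h by (rule eq_matI) (use X J O dd in auto)
  qed
qed

lemma conj_skew:
  fixes Q \<Omega> :: "real mat"
  assumes Qc: "Q \<in> carrier_mat n n" and Oc: "\<Omega> \<in> carrier_mat n n" and Ot: "transpose_mat \<Omega> = - \<Omega>"
  shows "transpose_mat (transpose_mat Q * \<Omega> * Q) = - (transpose_mat Q * \<Omega> * Q)"
proof -
  let ?T = "transpose_mat Q"
  have T: "?T \<in> carrier_mat n n" using Qc by simp
  have "transpose_mat (?T * \<Omega> * Q) = ?T * transpose_mat (?T * \<Omega>)"
    using transpose_mult[of "?T * \<Omega>" n n Q n] T Oc Qc by simp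
  also have "transpose_mat (?T * \<Omega>) = transpose_mat \<Omega> * Q"
    using transpose_mult[of ?T n n \<Omega> n] T Oc by simp
  also have "transpose_mat \<Omega> * Q = - (\<Omega> * Q)" unfolding Ot by (rule uminus_mult_left_mat) (use Oc Qc in simp)
  also have "?T * - (\<Omega> * Q) = - (?T * (\<Omega> * Q))" by (rule uminus_mult_right_mat) (use Oc Qc T in simp)
  also have "?T * (\<Omega> * Q) = ?T * \<Omega> * Q" using T Oc Qc by (intro assoc_mult_mat[symmetric]) auto
  finally show ?thesis .
qed

lemma lin_prod_nz: "(\<Prod>a\<leftarrow>xs. [:-a, 1:]) \<noteq> (0 :: real poly)"
proof (induction xs)
  case Nil show ?case by simp
next
  case (Cons b ys)
  have ne: "[:-b, 1:] \<noteq> (0::real poly)" by simp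
  show ?case by (simp only: list.map prod_list.Cons) (rule no_zero_divisors[OF ne Cons.IH])
qed

lemma order_linear_prod: "order x (\<Prod>a\<leftarrow>xs. [:-a, 1:]) = count_list xs (x :: real)"
proof (induction xs)
  case Nil thus ?case by (simp add: order_0I)
next
  case (Cons a xs)
  have nz: "(\<Prod>a\<leftarrow>xs. [:-a, 1:]) \<noteq> (0 :: real poly)" by (rule lin_prod_nz)
  have nz2: "[:-a, 1:] * (\<Prod>a\<leftarrow>xs. [:-a, 1:]) \<noteq> (0 :: real poly)"
    by (rule no_zero_divisors[OF _ nz]) simp
  have o1: "order x [:-a, 1:] = (if a = x then 1 else 0)"
  proof (cases "a = x")
    case True thus ?thesis using order_power_n_n[of x 1] by simp
  next
    case False
    have "poly [:-a, 1:] x \<noteq> 0" using False by simp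
    hence "order x [:-a, 1:] = 0" by (rule order_0I)
    thus ?thesis using False by simp
  qed
  show ?case using order_mult[OF nz2] o1 Cons by simp
qed

lemma count_replicate: "count_list (replicate k a) x = (if a = x then k else 0)"
  by (induction k) auto

lemma count_concat: "count_list (concat xss) x = sum_list (map (\<lambda>xs. count_list xs x) xss)"
  by (induction xss) auto

lemma pos_sq_eq: "(w::real) > 0 \<Longrightarrow> w0 > 0 \<Longrightarrow> (- (w * w) = - (w0 * w0)) = (w = w0)"
proof
  assume "w > 0" "w0 > 0" "- (w * w) = - (w0 * w0)"
  hence "(w - w0) * (w + w0) = 0" by (simp add: algebra_simps)
  thus "w = w0" using \<open>w > 0\<close> \<open>w0 > 0\<close> by simp
qed simp

lemma sum_distinct_fst:
  fixes bs :: "(real \<times> real mat) list"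
  assumes "distinct (map fst bs)" "(w, A) \<in> set bs"
  shows "sum_list (map (\<lambda>(w', A'). if w' = w then dim_row A' else 0) bs) = dim_row A"
  using assms
proof (induction bs)
  case Nil thus ?case by simp
next
  case (Cons b bs)
  obtain w1 A1 where b: "b = (w1, A1)" by (cases b) auto
  show ?case
  proof (cases "b = (w, A)")
    case True
    have "w \<notin> fst ` set bs" using Cons.prems True b by simp
    hence "sum_list (map (\<lambda>(w', A'). if w' = w then dim_row A' else 0) bs) = 0"
      by (subst sum_list_eq_0_iff) force
    thus ?thesis using True by simp
  next
    case False
    hence "(w, A) \<in> set bs" using Cons.prems by simp
    moreover hence "w1 \<noteq> w" using Cons.prems b by force
    ultimately show ?thesis using Cons b by simp
  qed
qed

lemma bf_mult:
  fixes J \<Omega> Q :: "real mat"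
  assumes bf: "block_form n J \<Omega> Q bs" and Oc: "\<Omega> \<in> carrier_mat n n"
  shows "set (map (\<lambda>(w, A). (w, dim_row A)) bs) =
    {(w, d). w > 0 \<and> d > 0 \<and> d = order (- (w * w)) (char_poly (\<Omega> * \<Omega>))}"
proof -
  let ?r = "n - sum_list (map (\<lambda>(w, A). dim_row A) bs)"
  let ?S = "transpose_mat Q * (\<Omega> * \<Omega>) * Q"
  have Qc: "Q \<in> carrier_mat n n" and TQ: "transpose_mat Q * Q = 1\<^sub>m n"
    using bf unfolding block_form_def orth_mat_def by auto
  have QQ: "Q * transpose_mat Q = 1\<^sub>m n"
    by (rule mat_mult_left_right_inverse[OF _ Qc TQ]) (use Qc in simp)
  have bsp: "\<forall>(w, A)\<in>set bs. w > 0 \<and> so_SO_block A" and dist: "distinct (map fst bs)"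
    using bf unfolding block_form_def by blast+
  have Sc: "?S \<in> carrier_mat n n" using conj_carrier[OF Qc mult_carrier_mat[OF Oc Oc]] .
  have sim: "similar_mat ?S (\<Omega> * \<Omega>)"
    by (rule similar_matI[where n = n and P = "transpose_mat Q" and Q = Q]) (use Qc Oc TQ QQ Sc in auto)
  have cp: "char_poly (\<Omega> * \<Omega>) = char_poly ?S" using char_poly_similar[OF sim] by simp
  have ut: "upper_triangular ?S" unfolding upper_triangular_def
  proof (intro allI impI)
    fix i j assume ij: "i < dim_row ?S" "j < i"
    have "j < dim_col ?S" "i \<noteq> j" using ij carrier_matD[OF Sc] by auto
    thus "?S $$ (i, j) = 0" using bf_square_diag[OF bf Oc] ij(1) unfolding diagonal_mat_def by blast
  qed
  have cpS: "char_poly ?S = (\<Prod>a\<leftarrow>diag_mat ?S. [:- a, 1:])" by (rule char_poly_upper_triangular[OF Sc ut])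
  have sqs: "\<forall>X\<in>set (map (\<lambda>(w, A). (- (w * w)) \<cdot>\<^sub>m 1\<^sub>m (dim_row A)) bs @ [0\<^sub>m ?r ?r]). square_mat X"
    by auto
  have dS: "diag_mat ?S = concat (map (\<lambda>(w, A). replicate (dim_row A) (- (w * w))) bs) @ replicate ?r 0"
    unfolding bf_square[OF bf Oc] diag_mat_diag_block[OF sqs]
    by (simp add: diag_mat_smult_one diag_mat_zero split_def comp_def)
  have K: "order (- (w0 * w0)) (char_poly (\<Omega> * \<Omega>)) = sum_list (map (\<lambda>(w, A). if w = w0 then dim_row A else 0) bs)"
    if w0: "w0 > 0" for w0
  proof -
    have "order (- (w0 * w0)) (char_poly (\<Omega> * \<Omega>)) = count_list (diag_mat ?S) (- (w0 * w0))"
      unfolding cp cpS order_linear_prod ..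
    also have "\<dots> = sum_list (map (\<lambda>(w, A). count_list (replicate (dim_row A) (- (w * w))) (- (w0 * w0))) bs)"
      unfolding dS using w0 by (simp add: count_concat count_replicate comp_def split_def)
    also have "\<dots> = sum_list (map (\<lambda>(w, A). if w = w0 then dim_row A else 0) bs)"
    proof (rule arg_cong[where f = sum_list], rule map_cong[OF refl])
      fix x assume xin: "x \<in> set bs"
      obtain w A where x1: "x = (w, A)" by (cases x)
      have x: "x = (w, A)" "(w, A) \<in> set bs" using x1 xin by auto
      hence "w > 0" using bsp by auto
      thus "(case x of (w, A) \<Rightarrow> count_list (replicate (dim_row A) (- (w * w))) (- (w0 * w0))) =
            (case x of (w, A) \<Rightarrow> if w = w0 then dim_row A else 0)"
        unfolding x using pos_sq_eq[OF _ w0] by (simp add: count_replicate)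
    qed
    finally show ?thesis .
  qed
  have main: "p \<in> set (map (\<lambda>(w, A). (w, dim_row A)) bs) \<longleftrightarrow>
      p \<in> {(w, d). w > 0 \<and> d > 0 \<and> d = order (- (w * w)) (char_poly (\<Omega> * \<Omega>))}" for p :: "real \<times> nat"
  proof -
    obtain w d where p: "p = (w, d)" by (cases p)
    have "((w, d) \<in> set (map (\<lambda>(w, A). (w, dim_row A)) bs)) = (w > 0 \<and> d > 0 \<and> d = order (- (w * w)) (char_poly (\<Omega> * \<Omega>)))"
    proof
      assume "(w, d) \<in> set (map (\<lambda>(w, A). (w, dim_row A)) bs)"
      then obtain A where A: "(w, A) \<in> set bs" "d = dim_row A" by auto
      hence w: "w > 0" and so: "so_SO_block A" using bsp by auto
      show "w > 0 \<and> d > 0 \<and> d = order (- (w * w)) (char_poly (\<Omega> * \<Omega>))"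
        using w so_block_props(2)[OF so] A K[OF w] sum_distinct_fst[OF dist A(1)] by simp
    next
      assume h: "w > 0 \<and> d > 0 \<and> d = order (- (w * w)) (char_poly (\<Omega> * \<Omega>))"
      hence sd: "sum_list (map (\<lambda>(w', A). if w' = w then dim_row A else 0) bs) = d" using K by simp
      have "w \<in> fst ` set bs"
      proof (rule ccontr)
        assume "w \<notin> fst ` set bs"
        hence "sum_list (map (\<lambda>(w', A). if w' = w then dim_row A else 0) bs) = 0"
          by (subst sum_list_eq_0_iff) force
        thus False using sd h by simp
      qed
      then obtain A where A: "(w, A) \<in> set bs" by force
      hence "d = dim_row A" using sd sum_distinct_fst[OF dist A] by simp
      thus "(w, d) \<in> set (map (\<lambda>(w, A). (w, dim_row A)) bs)" using A by force
    qed
    thus "p \<in> set (map (\<lambda>(w, A). (w, dim_row A)) bs) \<longleftrightarrow>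
      p \<in> {(w, d). w > 0 \<and> d > 0 \<and> d = order (- (w * w)) (char_poly (\<Omega> * \<Omega>))}" unfolding p by simp
  qed
  show ?thesis
  proof (intro equalityI subsetI)
    fix p assume "p \<in> set (map (\<lambda>(w, A). (w, dim_row A)) bs)"
    thus "p \<in> {(w, d). w > 0 \<and> d > 0 \<and> d = order (- (w * w)) (char_poly (\<Omega> * \<Omega>))}"
      by (rule main[THEN iffD1])
  next
    fix p assume "p \<in> {(w, d). w > 0 \<and> d > 0 \<and> d = order (- (w * w)) (char_poly (\<Omega> * \<Omega>))}"
    thus "p \<in> set (map (\<lambda>(w, A). (w, dim_row A)) bs)"
      by (rule main[THEN iffD2])
  qed
qed

theorem theorem1:
  fixes n :: nat and J M \<Omega> :: "real mat"
  assumes "symmetric_mat n J"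
    and "card {e. eigenvalue J e} = n"
    and "skew_mat n M"
    and "skew_mat n \<Omega>"
    and "\<Omega> * J + J * \<Omega> = M"
  shows "(M * \<Omega> - \<Omega> * M = 0\<^sub>m n n \<longleftrightarrow> (\<exists>Q bs. block_form n J \<Omega> Q bs))
    \<and> (\<forall>Q bs Q' bs'. block_form n J \<Omega> Q bs \<and> block_form n J \<Omega> Q' bs' \<longrightarrow>
         mset (map (\<lambda>(w, A). (w, dim_row A)) bs) = mset (map (\<lambda>(w, A). (w, dim_row A)) bs'))"
proof -
  have Jc: "J \<in> carrier_mat n n" using assms(1) unfolding symmetric_mat_def by auto
  have Oc: "\<Omega> \<in> carrier_mat n n" and Ot: "transpose_mat \<Omega> = - \<Omega>"
    using assms(4) unfolding skew_mat_def by auto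
  have OOc: "\<Omega> * \<Omega> \<in> carrier_mat n n" using Oc by simp
  have eq: "M * \<Omega> - \<Omega> * M = 0\<^sub>m n n \<longleftrightarrow> J * (\<Omega> * \<Omega>) = (\<Omega> * \<Omega>) * J"
    by (rule equil_iff[OF Jc Oc assms(5)])
  have part1: "M * \<Omega> - \<Omega> * M = 0\<^sub>m n n \<longleftrightarrow> (\<exists>Q bs. block_form n J \<Omega> Q bs)"
  proof
    assume "M * \<Omega> - \<Omega> * M = 0\<^sub>m n n"
    hence comm: "J * (\<Omega> * \<Omega>) = (\<Omega> * \<Omega>) * J" using eq by simp
    obtain Q where Qo: "orth_mat n Q" and QQ: "Q * transpose_mat Q = 1\<^sub>m n"
      and Dd: "diagonal_mat (transpose_mat Q * J * Q)"
      and Ddist: "\<forall>a<n. \<forall>b<n. a \<noteq> b \<longrightarrow> (transpose_mat Q * J * Q) $$ (a, a) \<noteq> (transpose_mat Q * J * Q) $$ (b, b)"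
      and Wsort: "\<forall>a b. a \<le> b \<longrightarrow> b < n \<longrightarrow> (transpose_mat Q * (\<Omega> * \<Omega>) * Q) $$ (a, a) \<le> (transpose_mat Q * (\<Omega> * \<Omega>) * Q) $$ (b, b)"
      using eig_basis[OF assms(1,2) OOc] by (elim exE conjE) (rule that)
    have Qc: "Q \<in> carrier_mat n n" using Qo unfolding orth_mat_def by auto
    define D where "D = transpose_mat Q * J * Q"
    define B where "B = transpose_mat Q * \<Omega> * Q"
    have Dc: "D \<in> carrier_mat n n" unfolding D_def using conj_carrier[OF Qc Jc] .
    have Bc: "B \<in> carrier_mat n n" unfolding B_def using conj_carrier[OF Qc Oc] .
    have BBc: "B * B \<in> carrier_mat n n" using mult_carrier_mat[OF Bc Bc] .
    have BB: "B * B = transpose_mat Q * (\<Omega> * \<Omega>) * Q" unfolding B_def by (rule conj_mult[OF Qc QQ Oc Oc])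
    have DBB: "D * (B * B) = (B * B) * D"
      using conj_comm[OF Qc QQ Jc OOc] comm unfolding D_def BB by simp
    have Ddiag: "diagonal_mat D" unfolding D_def by (rule Dd)
    have BBoff: "(B * B) $$ (a, b) = 0" if ab: "a < n" "b < n" "a \<noteq> b" for a b
    proof -
      have "(D * (B * B)) $$ (a, b) = D $$ (a, a) * (B * B) $$ (a, b)"
        by (rule diag_mult_left[OF Ddiag Dc BBc ab(1,2)])
      moreover have "((B * B) * D) $$ (a, b) = (B * B) $$ (a, b) * D $$ (b, b)"
        by (rule diag_mult_right[OF Ddiag Dc BBc ab(1,2)])
      ultimately have e: "D $$ (a, a) * (B * B) $$ (a, b) = (B * B) $$ (a, b) * D $$ (b, b)"
        using DBB by metis
      have "(D $$ (a, a) - D $$ (b, b)) * (B * B) $$ (a, b) =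
        D $$ (a, a) * (B * B) $$ (a, b) - (B * B) $$ (a, b) * D $$ (b, b)" by (simp add: algebra_simps)
      hence "(D $$ (a, a) - D $$ (b, b)) * (B * B) $$ (a, b) = 0" using e by simp
      moreover have "D $$ (a, a) \<noteq> D $$ (b, b)" using Ddist ab unfolding D_def by blast
      ultimately show ?thesis by simp
    qed
    define lab where "lab a = (B * B) $$ (a, a)" for a
    have BBdiag: "diagonal_mat (B * B)" unfolding diagonal_mat_def
    proof (intro allI impI)
      fix i j assume ij: "i < dim_row (B * B)" "j < dim_col (B * B)" "i \<noteq> j"
      have "i < n" "j < n" using ij(1,2) carrier_matD[OF BBc] by simp_all
      thus "(B * B) $$ (i, j) = 0" using BBoff ij(3) by blast
    qed
    have BBeq: "B * B = mat n n (\<lambda>(i, j). if i = j then lab i else 0)"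
      by (rule eq_matI) (use BBoff BBc in \<open>auto simp: lab_def\<close>)
    have skB: "transpose_mat B = - B" unfolding B_def by (rule conj_skew[OF Qc Oc Ot])
    have comm3: "B * (B * B) = (B * B) * B" using assoc_mult_mat[OF Bc Bc Bc] by simp
    have zero: "\<forall>i j. i < n \<longrightarrow> j < n \<longrightarrow> lab i \<noteq> lab j \<longrightarrow> B $$ (i, j) = 0"
    proof (intro allI impI)
      fix i j assume ij: "i < n" "j < n" and ne: "lab i \<noteq> lab j"
      have "(B * (B * B)) $$ (i, j) = B $$ (i, j) * (B * B) $$ (j, j)"
        by (rule diag_mult_right[OF BBdiag BBc Bc ij])
      moreover have "((B * B) * B) $$ (i, j) = (B * B) $$ (i, i) * B $$ (i, j)"
        by (rule diag_mult_left[OF BBdiag BBc Bc ij])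
      ultimately have e: "B $$ (i, j) * lab j = lab i * B $$ (i, j)"
        using comm3 unfolding lab_def by metis
      have "(lab i - lab j) * B $$ (i, j) = lab i * B $$ (i, j) - B $$ (i, j) * lab j"
        by (simp add: algebra_simps)
      hence "(lab i - lab j) * B $$ (i, j) = 0" using e by simp
      thus "B $$ (i, j) = 0" using ne by simp
    qed
    have nonpos: "\<forall>i<n. lab i \<le> 0"
    proof (intro allI impI)
      fix i assume i: "i < n"
      have "lab i = - (\<Sum>l\<in>{0..<n}. (B $$ (i, l))\<^sup>2)" unfolding lab_def by (rule skew_sq_diag[OF Bc skB i])
      moreover have "(\<Sum>l\<in>{0..<n}. (B $$ (i, l))\<^sup>2) \<ge> 0" by (rule sum_nonneg) simp
      ultimately show "lab i \<le> 0" by simp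
    qed
    have mono: "\<forall>i j. i \<le> j \<longrightarrow> j < n \<longrightarrow> lab i \<le> lab j"
      using Wsort unfolding lab_def BB by blast
    obtain bs where bs1: "\<forall>(w, A)\<in>set bs. w > 0 \<and> so_SO_block A \<and> (\<exists>i<n. lab i = -(w * w))"
      and bs2: "distinct (map fst bs)" and bs3: "sum_list (map (\<lambda>(w, A). dim_row A) bs) \<le> n"
      and bs4: "B = diag_block_mat (map (\<lambda>(w, A). w \<cdot>\<^sub>m A) bs @
         [0\<^sub>m (n - sum_list (map (\<lambda>(w, A). dim_row A) bs)) (n - sum_list (map (\<lambda>(w, A). dim_row A) bs))])"
      using block_decomp[OF Bc skB BBeq mono nonpos zero] by blast
    have "\<forall>(w, A)\<in>set bs. w > 0 \<and> so_SO_block A" using bs1 by auto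
    hence "block_form n J \<Omega> Q bs"
      unfolding block_form_def using Qo Dd bs2 bs3 bs4 unfolding B_def by blast
    thus "\<exists>Q bs. block_form n J \<Omega> Q bs" by blast
  next
    assume "\<exists>Q bs. block_form n J \<Omega> Q bs"
    then obtain Q bs where bf: "block_form n J \<Omega> Q bs" by blast
    have Qc: "Q \<in> carrier_mat n n" and TQ: "transpose_mat Q * Q = 1\<^sub>m n"
      and Dd: "diagonal_mat (transpose_mat Q * J * Q)"
      using bf unfolding block_form_def orth_mat_def by auto
    have QQ: "Q * transpose_mat Q = 1\<^sub>m n"
      by (rule mat_mult_left_right_inverse[OF _ Qc TQ]) (use Qc in simp)
    have Sd: "diagonal_mat (transpose_mat Q * (\<Omega> * \<Omega>) * Q)" by (rule bf_square_diag[OF bf Oc])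
    have "(transpose_mat Q * J * Q) * (transpose_mat Q * (\<Omega> * \<Omega>) * Q) =
          (transpose_mat Q * (\<Omega> * \<Omega>) * Q) * (transpose_mat Q * J * Q)"
      by (rule diag_comm[OF Dd Sd conj_carrier[OF Qc Jc] conj_carrier[OF Qc OOc]])
    hence "J * (\<Omega> * \<Omega>) = (\<Omega> * \<Omega>) * J" using conj_comm[OF Qc QQ Jc OOc] by simp
    thus "M * \<Omega> - \<Omega> * M = 0\<^sub>m n n" using eq by simp
  qed
  have part2: "\<forall>Q bs Q' bs'. block_form n J \<Omega> Q bs \<and> block_form n J \<Omega> Q' bs' \<longrightarrow>
         mset (map (\<lambda>(w, A). (w, dim_row A)) bs) = mset (map (\<lambda>(w, A). (w, dim_row A)) bs')"
  proof (intro allI impI, elim conjE)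
    fix Q bs Q' bs'
    assume bf: "block_form n J \<Omega> Q bs" and bf': "block_form n J \<Omega> Q' bs'"
    have dist: "distinct (map (\<lambda>(w, A). (w, dim_row A)) bs)"
      if "distinct (map fst bs)" for bs :: "(real \<times> real mat) list"
    proof -
      have "map fst (map (\<lambda>(w, A). (w, dim_row A)) bs) = map fst bs" by (induction bs) auto
      hence "distinct (map fst (map (\<lambda>(w, A). (w, dim_row A)) bs))" using that by (rule ssubst)
      thus ?thesis using distinct_map[of fst "map (\<lambda>(w, A). (w, dim_row A)) bs"] by blast
    qed
    have d1: "distinct (map fst bs)" using bf unfolding block_form_def by blast
    have d2: "distinct (map fst bs')" using bf' unfolding block_form_def by blast
    have "set (map (\<lambda>(w, A). (w, dim_row A)) bs) = set (map (\<lambda>(w, A). (w, dim_row A)) bs')"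
      unfolding bf_mult[OF bf Oc] bf_mult[OF bf' Oc] ..
    thus "mset (map (\<lambda>(w, A). (w, dim_row A)) bs) = mset (map (\<lambda>(w, A). (w, dim_row A)) bs')"
      using set_eq_iff_mset_eq_distinct[OF dist[OF d1] dist[OF d2]] by simp
  qed
  show ?thesis using part1 part2 by blast
qed

end
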